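(* There is a set $E\subset[0,1]$ with $\dim_H(E)=0$ such that for every irrational $x\in[0,1]\setminus E$ the sequence $(g_k(x))_{k\in\mathbb{N}}$ of $\bar O^1$-symbols of $x$ is unbounded.
   Context: Every irrational $x\in(0,1)$ has a unique representation ($\bar O^1$-expansion) $$x=\sum_{k=1}^\infty\frac{(-1)^{k-1}}{g_1(g_1+g_2)\cdots(g_1+g_2+\dots+g_k)},\qquad g_k=g_k(x)\in\mathbb{N}=\{1,2,3,\dots\}.$$ The numbers $g_k(x)$ are called the $\bar O^1$-symbols of $x$. $\dim_H$ denotes Hausdorff dimension. *)

theory Defs
  imports "HOL-Analysis.Analysis"
begin

definition hd_term :: "real \<Rightarrow> real set \<Rightarrow> ennreal" where
  "hd_term s A = (if A = {} then 0 else if s = 0 then 1 else ennreal (diameter A powr s))"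

definition hausdorff_pre :: "real \<Rightarrow> real \<Rightarrow> real set \<Rightarrow> ennreal" where
  "hausdorff_pre s \<delta> E =
     (INF U \<in> {U :: nat \<Rightarrow> real set. E \<subseteq> (\<Union>i. U i) \<and> (\<forall>i. bounded (U i) \<and> diameter (U i) \<le> \<delta>)}.
        (\<Sum>i. hd_term s (U i)))"

definition hausdorff_measure :: "real \<Rightarrow> real set \<Rightarrow> ennreal" where
  "hausdorff_measure s E = (SUP \<delta> \<in> {0<..}. hausdorff_pre s \<delta> E)"

definition hausdorff_dim :: "real set \<Rightarrow> ereal" where
  "hausdorff_dim E = Inf {ereal s | s. s \<ge> 0 \<and> hausdorff_measure s E = 0}"

text \<open>The O-bar-1 expansion; the symbols are indexed from 0, i.e. g 0 = g_1, g 1 = g_2, ...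
  The k-th term (k from 0) is (-1)^k / ((g_1)(g_1+g_2)...(g_1+...+g_{k+1})).\<close>

definition obar_expansion :: "real \<Rightarrow> (nat \<Rightarrow> nat) \<Rightarrow> bool" where
  "obar_expansion x g \<longleftrightarrow> (\<forall>k. g k \<ge> 1) \<and>
     (\<lambda>k. (-1) ^ k / (\<Prod>j\<le>k. real (\<Sum>i\<le>j. g i))) sums x"

end

theory Submission
  imports Defs
begin

definition Q :: "(nat \<Rightarrow> nat) \<Rightarrow> nat \<Rightarrow> real" where
  "Q g k = (\<Prod>j\<le>k. real (\<Sum>i\<le>j. g i))"
definition A :: "(nat \<Rightarrow> nat) \<Rightarrow> nat \<Rightarrow> real" where
  "A g k = 1 / Q g k"
definition S :: "(nat \<Rightarrow> nat) \<Rightarrow> nat \<Rightarrow> real" where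
  "S g n = (\<Sum>i<n. (-1)^i * A g i)"

lemma sum_ge: assumes "\<forall>i\<le>j. g i \<ge> 1" shows "real (\<Sum>i\<le>j. g i) \<ge> real (Suc j)"
proof -
  have "(\<Sum>i\<le>j. (1::nat)) \<le> (\<Sum>i\<le>j. g i)" by (rule sum_mono) (use assms in auto)
  then have "Suc j \<le> (\<Sum>i\<le>j. g i)" by simp
  then show ?thesis by (metis of_nat_le_iff)
qed

lemma Q_Suc: "Q g (Suc k) = Q g k * real (\<Sum>i\<le>Suc k. g i)"
  unfolding Q_def by (simp add: prod.atMost_Suc)

lemma Q_fact: assumes "\<forall>i\<le>k. g i \<ge> 1" shows "Q g k \<ge> fact (Suc k)"
  using assms
proof (induction k)
  case 0
  then show ?case by (simp add: Q_def)
next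
  case (Suc k)
  have h1: "Q g k \<ge> fact (Suc k)" using Suc by auto
  have h2: "real (\<Sum>i\<le>Suc k. g i) \<ge> real (Suc (Suc k))" using sum_ge Suc.prems by blast
  have "fact (Suc (Suc k)) = (fact (Suc k) :: real) * real (Suc (Suc k))"
    by (simp add: algebra_simps)
  also have "\<dots> \<le> Q g k * real (\<Sum>i\<le>Suc k. g i)"
    by (rule mult_mono[OF h1 h2]) (use h1 in \<open>auto intro: order_trans[OF _ h1]\<close>)
  finally show ?case by (simp add: Q_Suc)
qed

lemma Q_pos: assumes "\<forall>i\<le>k. g i \<ge> 1" shows "Q g k > 0"
  using Q_fact[OF assms] by (smt (verit) fact_gt_zero)

lemma A_le: assumes "\<forall>i\<le>k. g i \<ge> 1" shows "A g k \<le> 1 / fact (Suc k)"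
  unfolding A_def using Q_fact[OF assms] by (simp add: frac_le)

lemma A_mono: assumes "\<forall>i. g i \<ge> 1" shows "A g (Suc k) \<le> A g k"
proof -
  have p: "Q g k > 0" using Q_pos assms by blast
  have "real (\<Sum>i\<le>Suc k. g i) \<ge> 1" using sum_ge[of "Suc k" g] assms by simp
  then have "Q g k \<le> Q g (Suc k)" unfolding Q_Suc using p
    by (metis mult_le_cancel_left1 order_less_imp_not_less)
  then show ?thesis unfolding A_def using p by (simp add: frac_le)
qed

lemma A_nonneg: assumes "\<forall>i. g i \<ge> 1" shows "A g k \<ge> 0"
  unfolding A_def using Q_pos assms by (simp add: less_imp_le)

lemma A_lim: assumes "\<forall>i. g i \<ge> 1" shows "A g \<longlonglongrightarrow> 0"
proof (rule Lim_null_comparison[OF _ LIMSEQ_inverse_real_of_nat])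
  show "\<forall>\<^sub>F n in sequentially. norm (A g n) \<le> inverse (real (Suc n))"
  proof (intro always_eventually allI)
    fix n
    have "A g n \<le> 1 / fact (Suc n)" using A_le assms by blast
    also have "\<dots> \<le> 1 / real (Suc n)"
      by (rule frac_le) (auto simp: fact_ge_self)
    finally show "norm (A g n) \<le> inverse (real (Suc n))" using A_nonneg[OF assms, of n]
      by (simp add: divide_inverse)
  qed
qed

lemma bracket:
  assumes "obar_expansion x g"
  shows "S g (2*m) \<le> x \<and> x \<le> S g (2*m+1)"
proof -
  have g1: "\<forall>i. g i \<ge> 1" using assms unfolding obar_expansion_def by auto
  have "(\<lambda>k. (-1) ^ k * A g k) sums x"
    using assms unfolding obar_expansion_def A_def Q_def by simp
  then have x: "x = (\<Sum>k. (-1) ^ k * A g k)" by (simp add: sums_unique)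
  show ?thesis unfolding x S_def
    using summable_Leibniz'(2,4)[OF A_lim[OF g1] A_nonneg[OF g1] A_mono[OF g1]] by auto
qed

lemma dep:
  assumes "\<forall>i\<le>n. p i = g i"
  shows "k \<le> n \<Longrightarrow> Q p k = Q g k" and "k \<le> n \<Longrightarrow> A p k = A g k" and "k \<le> Suc n \<Longrightarrow> S p k = S g k"
proof -
  show qe: "k \<le> n \<Longrightarrow> Q p k = Q g k" for k unfolding Q_def using assms
    by (intro prod.cong refl) (auto intro!: arg_cong[where f=real] sum.cong)
  show "k \<le> n \<Longrightarrow> A p k = A g k" for k unfolding A_def using qe by simp
  show "k \<le> Suc n \<Longrightarrow> S p k = S g k" unfolding S_def A_def using qe
    by (intro sum.cong) auto
qed

lemma pow_powr: "0 \<le> (c::real) \<Longrightarrow> (c ^ n) powr s = (c powr s) ^ n"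
  by (induction n) (auto simp: powr_mult)

lemma lim_key:
  assumes s: "s > 0"
  shows "(\<lambda>n. real (Suc M) ^ n / fact n powr s) \<longlonglongrightarrow> 0"
proof -
  define c where "c = real (Suc M) powr (1/s)"
  have c0: "c > 0" unfolding c_def by simp
  have cs: "c powr s = real (Suc M)" unfolding c_def using s by (simp add: powr_powr)
  have "summable (\<lambda>n. inverse (fact n) * c ^ n)" by (rule summable_exp)
  then have "(\<lambda>n. inverse (fact n) * c ^ n) \<longlonglongrightarrow> 0" by (rule summable_LIMSEQ_zero)
  then have f: "(\<lambda>n. c ^ n / fact n) \<longlonglongrightarrow> 0" by (simp add: divide_inverse mult.commute)
  have "(\<lambda>n. (c ^ n / fact n) powr s) \<longlonglongrightarrow> 0"
    by (rule tendsto_zero_powrI[OF f tendsto_const]) (use c0 s in auto)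
  moreover have "(c ^ n / fact n) powr s = real (Suc M) ^ n / fact n powr s" for n
    using c0 by (simp add: powr_divide pow_powr cs)
  ultimately show ?thesis by simp
qed

definition EM :: "nat \<Rightarrow> real set" where
  "EM M = {x. \<exists>g. obar_expansion x g \<and> (\<forall>k. g k \<le> M)}"

definition J :: "nat \<Rightarrow> (nat \<Rightarrow> nat) \<Rightarrow> real set" where
  "J m p = {S p (2*m) .. S p (2*m+1)}"

lemma J_diam:
  assumes "p \<in> PiE {..2*m} (\<lambda>_. {1..K})"
  shows "diameter (J m p) \<le> 1 / fact (2*m+1)"
proof -
  have p1: "\<forall>i\<le>2*m. p i \<ge> 1" using assms by (auto simp: PiE_iff)
  have "S p (2*m+1) - S p (2*m) = A p (2*m)" unfolding S_def by simp
  moreover have "A p (2*m) \<le> 1 / fact (2*m+1)" using A_le[OF p1] by simp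
  moreover have "A p (2*m) \<ge> 0" unfolding A_def using Q_pos[OF p1] by simp
  ultimately show ?thesis unfolding J_def by simp
qed

lemma J_cover:
  assumes "x \<in> EM K"
  shows "\<exists>p \<in> PiE {..2*m} (\<lambda>_. {1..K}). x \<in> J m p"
proof -
  obtain g where g: "obar_expansion x g" "\<forall>k. g k \<le> K" using assms unfolding EM_def by auto
  have g1: "\<forall>i. g i \<ge> 1" using g(1) unfolding obar_expansion_def by auto
  define p where "p = restrict g {..2*m}"
  have pin: "p \<in> PiE {..2*m} (\<lambda>_. {1..K})" unfolding p_def using g(2) g1 by auto
  have eq: "\<forall>i\<le>2*m. p i = g i" unfolding p_def by auto
  have "S p (2*m) = S g (2*m)" "S p (2*m+1) = S g (2*m+1)" using dep(3)[OF eq] by auto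
  then have "x \<in> J m p" unfolding J_def using bracket[OF g(1), of m] by simp
  then show ?thesis using pin by blast
qed


lemma hd_term_le:
  assumes "s > 0" "bounded U" "diameter U \<le> b"
  shows "hd_term s U \<le> ennreal (b powr s)"
proof (cases "U = {}")
  case True then show ?thesis by (simp add: hd_term_def)
next
  case False
  have "0 \<le> diameter U" using assms(2) by (simp add: diameter_ge_0)
  then have "diameter U powr s \<le> b powr s" using assms by (intro powr_mono2) auto
  then show ?thesis using False assms(1) by (simp add: hd_term_def ennreal_leI)
qed

lemma EM_null:
  assumes s: "s > 0" and d: "\<delta> > 0"
  shows "hausdorff_pre s \<delta> (EM (Suc M)) = 0"
proof -
  have le: "hausdorff_pre s \<delta> (EM (Suc M)) \<le> 0 + ennreal e" if e: "e > 0" for e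
  proof -
    have ev1: "\<forall>\<^sub>F n in sequentially. real (Suc M) ^ n / fact n powr s < e"
      by (rule order_tendstoD(2)[OF lim_key[OF s] e])
    have "\<forall>\<^sub>F n in sequentially. inverse (real (Suc n)) < \<delta>"
      by (rule order_tendstoD(2)[OF LIMSEQ_inverse_real_of_nat d])
    from eventually_conj[OF ev1 this] obtain N where
      N: "\<And>n. n \<ge> N \<Longrightarrow> real (Suc M) ^ n / fact n powr s < e \<and> inverse (real (Suc n)) < \<delta>"
      unfolding eventually_sequentially by blast
    define m where "m = N"
    define n where "n = 2*m+1"
    have n1: "real (Suc M) ^ n / fact n powr s < e"
      using N[of n] unfolding n_def m_def by auto
    have n2: "inverse (real n) < \<delta>"
      using N[of "2*m"] unfolding n_def m_def by auto
    have fn: "1 / fact n \<le> \<delta>"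
    proof -
      have "1 / fact n \<le> 1 / real n" by (rule frac_le) (auto simp: n_def fact_ge_self)
      then show ?thesis using n2 by (simp add: divide_inverse)
    qed
    define P where "P = PiE {..2*m} (\<lambda>_. {1..Suc M})"
    have finP: "finite P" unfolding P_def by (simp add: finite_PiE)
    have cardP: "card P = Suc M ^ n" unfolding P_def n_def by (simp add: card_PiE)
    obtain h where h: "bij_betw h {0..<card P} P" using ex_bij_betw_nat_finite[OF finP] by blast
    define U where "U i = (if i < card P then J m (h i) else {})" for i
    have hP: "i < card P \<Longrightarrow> h i \<in> P" for i using h by (auto simp: bij_betw_def)
    have Ub: "bounded (U i) \<and> diameter (U i) \<le> 1 / fact n" for i
    proof (cases "i < card P")
      case True
      then show ?thesis unfolding U_def J_def using J_diam[of "h i" m "Suc M"] hP[OF True]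
        by (simp add: P_def n_def J_def)
    next
      case False then show ?thesis unfolding U_def by simp
    qed
    have Ucov: "EM (Suc M) \<subseteq> (\<Union>i. U i)"
    proof
      fix x assume "x \<in> EM (Suc M)"
      then obtain p where p: "p \<in> P" "x \<in> J m p" using J_cover unfolding P_def by blast
      then have "p \<in> h ` {0..<card P}" using h unfolding bij_betw_def by simp
      then obtain i where "i \<in> {0..<card P}" "p = h i" by blast
      then show "x \<in> (\<Union>i. U i)" using p unfolding U_def by auto
    qed
    have inC: "U \<in> {U :: nat \<Rightarrow> real set. EM (Suc M) \<subseteq> (\<Union>i. U i) \<and> (\<forall>i. bounded (U i) \<and> diameter (U i) \<le> \<delta>)}"
    proof -
      have "\<forall>i. bounded (U i) \<and> diameter (U i) \<le> \<delta>" using Ub fn by (meson order_trans)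
      then show ?thesis using Ucov by simp
    qed
    have "hausdorff_pre s \<delta> (EM (Suc M)) \<le> (\<Sum>i. hd_term s (U i))"
      unfolding hausdorff_pre_def by (rule INF_lower[OF inC])
    also have "(\<Sum>i. hd_term s (U i)) = (\<Sum>i\<in>{0..<card P}. hd_term s (U i))"
      by (rule suminf_finite) (auto simp: U_def hd_term_def)
    also have "\<dots> = (\<Sum>i\<in>{0..<card P}. hd_term s (J m (h i)))"
      by (rule sum.cong) (auto simp: U_def)
    also have "\<dots> = (\<Sum>p\<in>P. hd_term s (J m p))"
      using sum.reindex_bij_betw[OF h, of "\<lambda>p. hd_term s (J m p)"] by simp
    also have "\<dots> \<le> (\<Sum>p\<in>P. ennreal ((1 / fact n) powr s))"
    proof (rule sum_mono)
      fix p assume "p \<in> P"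
      then show "hd_term s (J m p) \<le> ennreal ((1 / fact n) powr s)"
        using J_diam[of p m "Suc M"] s unfolding P_def n_def
        by (intro hd_term_le) (auto simp: J_def)
    qed
    also have "\<dots> = ennreal (real (card P) * (1 / fact n) powr s)"
    proof -
      define c where "c = (1 / fact n :: real) powr s"
      have "(\<Sum>p\<in>P. ennreal c) = ennreal (\<Sum>p\<in>P. c)"
        by (rule sum_ennreal) (simp add: c_def)
      also have "(\<Sum>p\<in>P. c) = real (card P) * c" by (rule sum_constant)
      finally show ?thesis unfolding c_def .
    qed
    also have "\<dots> \<le> ennreal e"
    proof (rule ennreal_leI)
      have "real (card P) * (1 / fact n) powr s = real (Suc M) ^ n / fact n powr s"
        by (simp add: cardP powr_divide)
      then show "real (card P) * (1 / fact n) powr s \<le> e" using n1 by simp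
    qed
    finally show ?thesis by simp
  qed
  have "hausdorff_pre s \<delta> (EM (Suc M)) \<le> 0" by (rule ennreal_le_epsilon) (rule le, assumption)
  then show ?thesis by simp
qed


lemma pre_mono:
  assumes "X \<subseteq> Y"
  shows "hausdorff_pre s \<delta> X \<le> hausdorff_pre s \<delta> Y"
  unfolding hausdorff_pre_def by (rule INF_superset_mono) (use assms in auto)

lemma pre_union:
  fixes B :: "nat \<Rightarrow> real set"
  assumes B: "\<And>M. hausdorff_pre s \<delta> (B M) = 0"
  shows "hausdorff_pre s \<delta> (\<Union>M. B M) = 0"
proof -
  define Cov where "Cov X = {U :: nat \<Rightarrow> real set. X \<subseteq> (\<Union>i. U i) \<and> (\<forall>i. bounded (U i) \<and> diameter (U i) \<le> \<delta>)}" for X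
  have hp: "hausdorff_pre s \<delta> X = (INF U\<in>Cov X. (\<Sum>i. hd_term s (U i)))" for X
    unfolding hausdorff_pre_def Cov_def ..
  have le: "hausdorff_pre s \<delta> (\<Union>M. B M) \<le> 0 + ennreal e" if e: "e > 0" for e
  proof -
    have "\<forall>M. \<exists>U. U \<in> Cov (B M) \<and> (\<Sum>i. hd_term s (U i)) < ennreal (e * (1/2)^Suc M)"
    proof
      fix M
      have "(INF U\<in>Cov (B M). (\<Sum>i. hd_term s (U i))) < ennreal (e * (1/2)^Suc M)"
        using B[of M] e unfolding hp by simp
      then show "\<exists>U. U \<in> Cov (B M) \<and> (\<Sum>i. hd_term s (U i)) < ennreal (e * (1/2)^Suc M)"
        unfolding INF_less_iff by blast
    qed
    then obtain C where C: "\<And>M. C M \<in> Cov (B M)"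
      "\<And>M. (\<Sum>i. hd_term s (C M i)) < ennreal (e * (1/2)^Suc M)"
      by metis
    define V where "V i = C (fst (prod_decode i)) (snd (prod_decode i))" for i
    have "V \<in> Cov (\<Union>M. B M)"
    proof -
      have "x \<in> (\<Union>i. V i)" if xB: "x \<in> B M" for x M
      proof -
        obtain j where "x \<in> C M j" using C(1)[of M] xB unfolding Cov_def by blast
        then have "x \<in> V (prod_encode (M, j))" unfolding V_def by simp
        then show ?thesis by blast
      qed
      moreover have "bounded (V i) \<and> diameter (V i) \<le> \<delta>" for i
        using C(1)[of "fst (prod_decode i)"] unfolding Cov_def V_def by blast
      ultimately show ?thesis unfolding Cov_def by blast
    qed
    then have "hausdorff_pre s \<delta> (\<Union>M. B M) \<le> (\<Sum>i. hd_term s (V i))"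
      unfolding hp by (rule INF_lower)
    also have "(\<Sum>i. hd_term s (V i)) = (\<Sum>M. (\<Sum>j. hd_term s (C M j)))"
      unfolding V_def
      using suminf_ennreal_2dimen[of "\<lambda>M. (\<Sum>j. hd_term s (C M j))" "\<lambda>(M,j). hd_term s (C M j)"]
      by (simp add: case_prod_beta)
    also have "\<dots> \<le> (\<Sum>M. ennreal (e * (1/2)^Suc M))"
      by (rule suminf_le) (use C(2) in \<open>auto intro: less_imp_le\<close>)
    also have "\<dots> = ennreal (\<Sum>M. e * (1/2)^Suc M)"
      by (rule suminf_ennreal2) (use e power_half_series in \<open>auto intro: summable_mult sums_summable\<close>)
    also have "(\<Sum>M. e * (1/2)^Suc M) = e"
      using sums_mult[OF power_half_series, of e] by (simp add: sums_iff)
    finally show ?thesis by simp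
  qed
  have "hausdorff_pre s \<delta> (\<Union>M. B M) \<le> 0" by (rule ennreal_le_epsilon) (rule le, assumption)
  then show ?thesis by simp
qed

theorem corollary2:
  shows "\<exists>E \<subseteq> {0..1::real}. hausdorff_dim E = 0 \<and>
           (\<forall>x \<in> {0..1} - E. x \<notin> \<rat> \<longrightarrow>
              (\<forall>g. obar_expansion x g \<longrightarrow> \<not> bdd_above (range g)))"
proof -
  define E where "E = {x \<in> {0..1::real}. \<exists>g. obar_expansion x g \<and> bdd_above (range g)}"
  have sub: "E \<subseteq> (\<Union>M. EM (Suc M))"
  proof
    fix x assume "x \<in> E"
    then obtain g where g: "obar_expansion x g" "bdd_above (range g)" unfolding E_def by blast
    then obtain K where "\<forall>k. g k \<le> K" by (auto simp: bdd_above_def)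
    then have "\<forall>k. g k \<le> Suc K" using le_SucI by blast
    then have "x \<in> EM (Suc K)" unfolding EM_def using g(1) by blast
    then show "x \<in> (\<Union>M. EM (Suc M))" by blast
  qed
  have H0: "hausdorff_measure s E = 0" if s: "s > 0" for s
  proof -
    have "hausdorff_pre s \<delta> E = 0" if d: "\<delta> > 0" for \<delta>
    proof -
      have "hausdorff_pre s \<delta> E \<le> hausdorff_pre s \<delta> (\<Union>M. EM (Suc M))" by (rule pre_mono[OF sub])
      also have "\<dots> = 0" by (rule pre_union) (rule EM_null[OF s d])
      finally show ?thesis by simp
    qed
    then show ?thesis unfolding hausdorff_measure_def by simp
  qed
  have dim: "hausdorff_dim E = 0"
  proof -
    let ?A = "{ereal s | s. s \<ge> 0 \<and> hausdorff_measure s E = 0}"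
    have ge: "0 \<le> Inf ?A" by (rule Inf_greatest) auto
    have le: "Inf ?A \<le> ereal s" if "s > 0" for s
      by (rule Inf_lower) (use that H0 in auto)
    have "Inf ?A \<le> 0"
    proof (rule ccontr)
      assume "\<not> Inf ?A \<le> 0"
      then have "0 < Inf ?A" by simp
      then obtain r where r: "0 < ereal r" "ereal r < Inf ?A" using ereal_dense2 by (meson dense)
      then show False using le[of r] by auto
    qed
    then show ?thesis unfolding hausdorff_dim_def using ge by simp
  qed
  have "E \<subseteq> {0..1}" unfolding E_def by auto
  moreover have "\<forall>x \<in> {0..1} - E. x \<notin> \<rat> \<longrightarrow> (\<forall>g. obar_expansion x g \<longrightarrow> \<not> bdd_above (range g))"
    unfolding E_def by auto
  ultimately show ?thesis using dim by blast
qed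

end
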